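(* Let $\epsilon\in(0,1/e]$, $p_v,p_e\in(0,1]$, let $G=(V,E)$ be a graph with nonnegative edge weights $w_e$, and let $\tilde x$ be the values set in step 1 of the non-crucial edge procedure (context). Then $$\mathbb{E}\Big[\sum_{e\in\mathcal{E}_Q\cap N}w_e\,\tilde x_e\Big]\ \ge\ (1-\epsilon)\,\varphi(N),$$ where the expectation is over the randomness of Algorithm 1 and the realization $\mathcal{G}$.
   Context: Realization model: given $p_v,p_e\in(0,1]$ and $G=(V,E)$ with weights $w_e\ge0$, a realization $\mathcal{G}=(\mathcal{V},\mathcal{E})$ keeps each vertex independently with probability $p_v$ and each edge $(u,v)$ independently with probability $p_e$ provided both $u,v$ are kept. Fix a deterministic algorithm computing a maximum-weight matching $M(H)$. $q_e:=\Pr[e\in M(\mathcal{G})]$. For $X\subseteq E$, $\varphi(X):=\sum_{e\in X}w_eq_e$. $\tau=\frac{\epsilon^3p_v^2p_e}{20\log(1/\epsilon)}$, $R=\frac{2000\log(1/\epsilon)\log(1/(\epsilon p_v^2p_e))}{\epsilon^4p_v^2p_e}$. $N=\{e\in E:q_e<\tau\}$. Algorithm 1: for $r=1,\dots,R$ draw an independent realization $\mathcal{G}_r$ and put the edges of $M(\mathcal{G}_r)$ into $Q=(V,E_Q)$; $f_e:=$ (number of $r$ with $e\in M(\mathcal{G}_r)$)$/R$. The realization $\mathcal{G}$ is independent of the algorithm's samples; $\mathcal{E}_Q=E_Q\cap\mathcal{E}$. Step 1 of the non-crucial edge procedure: for $e\in\mathcal{E}_Q\cap N$, $\tilde x_e=\min\{f_e/(p_v^2p_e),\,2\tau/(p_v^2p_e)\}$;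 $\tilde x_e=0$ otherwise. *)

theory Defs
  imports "HOL-Probability.Probability"
begin

definition is_graph :: "'a set \<Rightarrow> 'a set set \<Rightarrow> bool" where
  "is_graph V E \<longleftrightarrow> finite V \<and> (\<forall>e\<in>E. e \<subseteq> V \<and> card e = 2)"

definition is_matching :: "'a set set \<Rightarrow> bool" where
  "is_matching M \<longleftrightarrow> (\<forall>e\<in>M. \<forall>e'\<in>M. e \<noteq> e' \<longrightarrow> e \<inter> e' = {})"

definition mweight :: "('a set \<Rightarrow> real) \<Rightarrow> 'a set set \<Rightarrow> real" where
  "mweight w M = (\<Sum>e\<in>M. w e)"

definition is_max_weight_matching :: "('a set \<Rightarrow> real) \<Rightarrow> 'a set set \<Rightarrow> 'a set set \<Rightarrow> bool" where
  "is_max_weight_matching w Er M \<longleftrightarrow>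
     M \<subseteq> Er \<and> is_matching M \<and>
     (\<forall>M'. M' \<subseteq> Er \<longrightarrow> is_matching M' \<longrightarrow> mweight w M' \<le> mweight w M)"

text \<open>Distribution of a realization (kept vertices, kept edges): each vertex kept
  independently w.p. pv, each edge kept independently w.p. pe provided both endpoints are kept.\<close>
definition realization_pmf :: "'a set \<Rightarrow> 'a set set \<Rightarrow> real \<Rightarrow> real \<Rightarrow> ('a set \<times> 'a set set) pmf" where
  "realization_pmf V E pv pe =
     map_pmf (\<lambda>(kv, ke). ({v\<in>V. kv v}, {e\<in>E. ke e \<and> (\<forall>v\<in>e. kv v)}))
       (pair_pmf (Pi_pmf V False (\<lambda>_. bernoulli_pmf pv)) (Pi_pmf E False (\<lambda>_. bernoulli_pmf pe)))"

definition qprob :: "'a set \<Rightarrow> 'a set set \<Rightarrow> real \<Rightarrow> real \<Rightarrow> ('a set \<times> 'a set set \<Rightarrow> 'a set set) \<Rightarrow> 'a set \<Rightarrow> real" where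
  "qprob V E pv pe M e = measure_pmf.prob (realization_pmf V E pv pe) {H. e \<in> M H}"

definition phi :: "'a set \<Rightarrow> 'a set set \<Rightarrow> real \<Rightarrow> real \<Rightarrow> ('a set \<times> 'a set set \<Rightarrow> 'a set set)
     \<Rightarrow> ('a set \<Rightarrow> real) \<Rightarrow> 'a set set \<Rightarrow> real" where
  "phi V E pv pe M w X = (\<Sum>e\<in>X. w e * qprob V E pv pe M e)"

definition tau :: "real \<Rightarrow> real \<Rightarrow> real \<Rightarrow> real" where
  "tau eps pv pe = eps ^ 3 * pv ^ 2 * pe / (20 * ln (1 / eps))"

definition rounds :: "real \<Rightarrow> real \<Rightarrow> real \<Rightarrow> nat" where
  "rounds eps pv pe = nat \<lceil>2000 * ln (1 / eps) * ln (1 / (eps * pv ^ 2 * pe)) / (eps ^ 4 * pv ^ 2 * pe)\<rceil>"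

definition noncrucial :: "'a set \<Rightarrow> 'a set set \<Rightarrow> real \<Rightarrow> real \<Rightarrow> real \<Rightarrow> ('a set \<times> 'a set set \<Rightarrow> 'a set set) \<Rightarrow> 'a set set" where
  "noncrucial V E eps pv pe M = {e\<in>E. qprob V E pv pe M e < tau eps pv pe}"

definition samples_pmf :: "'a set \<Rightarrow> 'a set set \<Rightarrow> real \<Rightarrow> real \<Rightarrow> nat \<Rightarrow> (nat \<Rightarrow> 'a set \<times> 'a set set) pmf" where
  "samples_pmf V E pv pe R = Pi_pmf {..<R} ({}, {}) (\<lambda>_. realization_pmf V E pv pe)"

definition EQ :: "('a set \<times> 'a set set \<Rightarrow> 'a set set) \<Rightarrow> nat \<Rightarrow> (nat \<Rightarrow> 'a set \<times> 'a set set) \<Rightarrow> 'a set set" where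
  "EQ M R S = (\<Union>r<R. M (S r))"

definition freq :: "('a set \<times> 'a set set \<Rightarrow> 'a set set) \<Rightarrow> nat \<Rightarrow> (nat \<Rightarrow> 'a set \<times> 'a set set) \<Rightarrow> 'a set \<Rightarrow> real" where
  "freq M R S e = real (card {r\<in>{..<R}. e \<in> M (S r)}) / real R"

definition xtilde :: "'a set \<Rightarrow> 'a set set \<Rightarrow> real \<Rightarrow> real \<Rightarrow> real \<Rightarrow> ('a set \<times> 'a set set \<Rightarrow> 'a set set)
     \<Rightarrow> (nat \<Rightarrow> 'a set \<times> 'a set set) \<Rightarrow> 'a set \<times> 'a set set \<Rightarrow> 'a set \<Rightarrow> real" where
  "xtilde V E eps pv pe M S H e =
     (if e \<in> EQ M (rounds eps pv pe) S \<inter> snd H \<inter> noncrucial V E eps pv pe M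
      then min (freq M (rounds eps pv pe) S e / (pv ^ 2 * pe)) (2 * tau eps pv pe / (pv ^ 2 * pe))
      else 0)"

end

theory Submission
  imports Defs
begin

lemma int_bnd: fixes f :: "'a \<Rightarrow> real" assumes "\<And>x. \<bar>f x\<bar> \<le> B" shows "integrable (measure_pmf p) f"
  by (rule measure_pmf.integrable_const_bound[where B=B]) (auto simp: assms)

lemma E_pair_mult:
  fixes f :: "'a \<Rightarrow> real" and g :: "'b \<Rightarrow> real"
  assumes f0: "\<And>x. 0 \<le> f x" and f1: "\<And>x. f x \<le> B" and g0: "\<And>y. 0 \<le> g y" and g1: "\<And>y. g y \<le> C"
  shows "measure_pmf.expectation (pair_pmf p q) (\<lambda>z. f (fst z) * g (snd z)) =
         measure_pmf.expectation p f * measure_pmf.expectation q g"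
proof -
  have B0: "0 \<le> B" using f0 f1 order_trans by blast
  have C0: "0 \<le> C" using g0 g1 order_trans by blast
  have ip: "integrable (measure_pmf p) f" by (rule int_bnd[where B=B]) (use f0 f1 in auto)
  have iq: "integrable (measure_pmf q) g" by (rule int_bnd[where B=C]) (use g0 g1 in auto)
  have ipq: "integrable (measure_pmf (pair_pmf p q)) (\<lambda>z. f (fst z) * g (snd z))"
    by (rule int_bnd[where B="B*C"]) (use f0 f1 g0 g1 B0 C0 in \<open>auto simp: abs_mult intro!: mult_mono\<close>)
  have "ennreal (measure_pmf.expectation (pair_pmf p q) (\<lambda>z. f (fst z) * g (snd z)))
      = (\<integral>\<^sup>+z. ennreal (f (fst z) * g (snd z)) \<partial>pair_pmf p q)"
    by (rule nn_integral_eq_integral[symmetric]) (use ipq f0 g0 in auto)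
  also have "\<dots> = (\<integral>\<^sup>+a. \<integral>\<^sup>+b. ennreal (f a) * ennreal (g b) \<partial>q \<partial>p)"
    by (simp add: nn_integral_pair_pmf' ennreal_mult f0 g0)
  also have "\<dots> = (\<integral>\<^sup>+a. ennreal (f a) * (\<integral>\<^sup>+b. ennreal (g b) \<partial>q) \<partial>p)"
    by (simp add: nn_integral_cmult)
  also have "\<dots> = (\<integral>\<^sup>+a. ennreal (f a) \<partial>p) * (\<integral>\<^sup>+b. ennreal (g b) \<partial>q)"
    by (simp add: nn_integral_multc)
  also have "\<dots> = ennreal (measure_pmf.expectation p f) * ennreal (measure_pmf.expectation q g)"
    using ip iq f0 g0 by (simp add: nn_integral_eq_integral)
  also have "\<dots> = ennreal (measure_pmf.expectation p f * measure_pmf.expectation q g)"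
    by (simp add: ennreal_mult f0 g0)
  finally show ?thesis
    by (subst (asm) ennreal_inj) (auto simp: f0 g0 intro!: integral_nonneg_AE mult_nonneg_nonneg)
qed

lemma E_Pi_subset:
  fixes h :: "'i \<Rightarrow> 'b \<Rightarrow> real"
  assumes A: "finite A" and BA: "B \<subseteq> A" and h0: "\<And>x v. 0 \<le> h x v" and h1: "\<And>x v. h x v \<le> 1"
  shows "measure_pmf.expectation (Pi_pmf A d p) (\<lambda>y. \<Prod>x\<in>B. h x (y x)) =
         (\<Prod>x\<in>B. measure_pmf.expectation (p x) (h x))"
proof -
  have Bi: "A \<inter> B = B" using BA by auto
  have "(\<lambda>y. \<Prod>x\<in>B. h x (y x)) = (\<lambda>y. \<Prod>x\<in>A. (\<lambda>x v. if x \<in> B then h x v else 1) x (y x))"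
    using prod.inter_restrict[OF A, of "\<lambda>x. h x (_ x)" B] Bi by (auto intro!: ext)
  then have "measure_pmf.expectation (Pi_pmf A d p) (\<lambda>y. \<Prod>x\<in>B. h x (y x)) =
     (\<Prod>x\<in>A. measure_pmf.expectation (p x) (\<lambda>v. if x \<in> B then h x v else 1))"
    by (simp only:) (rule expectation_prod_Pi_pmf[OF A], rule int_bnd[where B=1], use h0 h1 in auto)
  also have "\<dots> = (\<Prod>x\<in>A. if x \<in> B then measure_pmf.expectation (p x) (h x) else 1)"
    by (rule prod.cong) auto
  also have "\<dots> = (\<Prod>x\<in>B. measure_pmf.expectation (p x) (h x))"
    using prod.inter_restrict[OF A, of "\<lambda>x. measure_pmf.expectation (p x) (h x)" B] Bi by simp
  finally show ?thesis .
qed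

lemma prob_edge:
  assumes G: "is_graph V E" and e: "e \<in> E" and pv: "0 \<le> pv" "pv \<le> 1" and pe: "0 \<le> pe" "pe \<le> 1"
  shows "measure_pmf.expectation (realization_pmf V E pv pe) (\<lambda>H. if e \<in> snd H then 1 else 0) = pv^2 * pe"
proof -
  have fV: "finite V" and eV: "e \<subseteq> V" and ce: "card e = 2" using G e by (auto simp: is_graph_def)
  have fE: "finite E" using G unfolding is_graph_def
    by (meson Pow_iff finite_Pow_iff finite_subset subsetI)
  have fe: "finite e" using ce card.infinite by fastforce
  define F where "F = (\<lambda>kv::'a\<Rightarrow>bool. \<Prod>v\<in>e. (\<lambda>v b. if b then 1 else (0::real)) v (kv v))"
  define Gf where "Gf = (\<lambda>ke::'a set\<Rightarrow>bool. \<Prod>x\<in>{e}. (\<lambda>x b. if b then 1 else (0::real)) x (ke x))"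
  have eq: "(\<lambda>H. if e \<in> snd H then 1 else (0::real)) \<circ> (\<lambda>(kv, ke). ({v\<in>V. kv v}, {e\<in>E. ke e \<and> (\<forall>v\<in>e. kv v)}))
      = (\<lambda>z. F (fst z) * Gf (snd z))"
    using e fe by (auto simp: F_def Gf_def fun_eq_iff prod_zero_iff)
  have F01: "0 \<le> F x" "F x \<le> 1" for x unfolding F_def by (auto intro!: prod_nonneg prod_le_1)
  have G01: "0 \<le> Gf x" "Gf x \<le> 1" for x unfolding Gf_def by auto
  have "measure_pmf.expectation (realization_pmf V E pv pe) (\<lambda>H. if e \<in> snd H then 1 else (0::real))
     = measure_pmf.expectation (pair_pmf (Pi_pmf V False (\<lambda>_. bernoulli_pmf pv)) (Pi_pmf E False (\<lambda>_. bernoulli_pmf pe)))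
         (\<lambda>z. F (fst z) * Gf (snd z))"
    unfolding realization_pmf_def integral_map_pmf eq[symmetric] by (simp add: comp_def)
  also have "\<dots> = measure_pmf.expectation (Pi_pmf V False (\<lambda>_. bernoulli_pmf pv)) F *
                  measure_pmf.expectation (Pi_pmf E False (\<lambda>_. bernoulli_pmf pe)) Gf"
    by (rule E_pair_mult[where B=1 and C=1]) (use F01 G01 in auto)
  also have "measure_pmf.expectation (Pi_pmf V False (\<lambda>_. bernoulli_pmf pv)) F = (\<Prod>v\<in>e. pv)"
    unfolding F_def by (subst E_Pi_subset[OF fV eV]) (use pv in auto)
  also have "measure_pmf.expectation (Pi_pmf E False (\<lambda>_. bernoulli_pmf pe)) Gf = pe"
    unfolding Gf_def by (subst E_Pi_subset[OF fE]) (use pe e in auto)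
  finally show ?thesis using ce by simp
qed

lemma card_sum_ind: "finite A \<Longrightarrow> real (card {r\<in>A. P r}) = (\<Sum>r\<in>A. if P r then 1 else 0)"
  by (simp add: sum.If_cases Int_def conj_commute)

lemma samples_moments:
  fixes M :: "'a set \<times> 'a set set \<Rightarrow> 'a set set" and V :: "'a set" and E :: "'a set set"
    and pv pe :: real and e :: "'a set" and R :: nat
  defines "q \<equiv> qprob V E pv pe M e"
  assumes R: "0 < R"
  shows "measure_pmf.expectation (samples_pmf V E pv pe R) (\<lambda>S. freq M R S e) = q"
    and "measure_pmf.expectation (samples_pmf V E pv pe R) (\<lambda>S. (freq M R S e)^2) \<le> q^2 + q / R"
proof -
  let ?P = "samples_pmf V E pv pe R"
  define X where "X = (\<lambda>r (S::nat \<Rightarrow> 'a set \<times> 'a set set). if e \<in> M (S r) then 1 else (0::real))"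
  define h where "h = (\<lambda>(x::nat) H. if e \<in> M H then 1 else (0::real))"
  have q: "measure_pmf.expectation (realization_pmf V E pv pe) (h r) = q" for r
  proof -
    have "h r = indicator {H. e \<in> M H}" by (auto simp: h_def fun_eq_iff)
    then show ?thesis by (simp add: q_def qprob_def)
  qed
  have q0: "0 \<le> q" unfolding q_def qprob_def by simp
  have fr: "freq M R S e = (\<Sum>r<R. X r S) / R" for S
    unfolding freq_def X_def by (subst card_sum_ind) auto
  have Xi: "integrable ?P (X r)" for r by (rule int_bnd[where B=1]) (auto simp: X_def)
  have XXi: "integrable ?P (\<lambda>S. X r S * X s S)" for r s by (rule int_bnd[where B=1]) (auto simp: X_def)
  have EX: "measure_pmf.expectation ?P (X r) = q" if "r < R" for r
  proof -
    have "X r = (\<lambda>y. \<Prod>x\<in>{r}. h x (y x))" by (auto simp: X_def h_def fun_eq_iff)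
    then show ?thesis unfolding samples_pmf_def
      by (simp only:) (subst E_Pi_subset, use that q in \<open>auto simp: h_def\<close>)
  qed
  have EXX: "measure_pmf.expectation ?P (\<lambda>S. X r S * X s S) \<le> q^2 + (if r = s then q else 0)"
    if "r < R" "s < R" for r s
  proof (cases "r = s")
    case True
    then have "(\<lambda>S. X r S * X s S) = X r" by (auto simp: X_def fun_eq_iff)
    then show ?thesis using EX[OF that(1)] True by (simp add: q0)
  next
    case False
    have "(\<lambda>S. X r S * X s S) = (\<lambda>y. \<Prod>x\<in>{r,s}. h x (y x))" using False by (auto simp: X_def h_def fun_eq_iff)
    then have "measure_pmf.expectation ?P (\<lambda>S. X r S * X s S) = (\<Prod>x\<in>{r,s}. q)" unfolding samples_pmf_def
      by (simp only:) (subst E_Pi_subset, use that q in \<open>auto simp: h_def\<close>)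
    then show ?thesis using False by (simp add: power2_eq_square)
  qed
  show "measure_pmf.expectation ?P (\<lambda>S. freq M R S e) = q"
    using R by (simp add: fr Bochner_Integration.integral_sum Xi EX)
  have A: "measure_pmf.expectation ?P (\<lambda>S. (freq M R S e)^2) =
        measure_pmf.expectation ?P (\<lambda>S. (\<Sum>r<R. \<Sum>s<R. X r S * X s S)) / (real R)^2"
    by (simp add: fr power_divide power2_eq_square sum_product)
  have "measure_pmf.expectation ?P (\<lambda>S. (\<Sum>r<R. \<Sum>s<R. X r S * X s S)) =
      (\<Sum>r<R. \<Sum>s<R. measure_pmf.expectation ?P (\<lambda>S. X r S * X s S))"
    by (simp add: Bochner_Integration.integral_sum XXi)
  also have "\<dots> \<le> (\<Sum>r<(R::nat). \<Sum>s<R. q^2 + (if r = s then q else 0))"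
    by (intro sum_mono EXX) auto
  also have "\<dots> = (real R)^2 * q^2 + R * q"
    by (simp add: sum.distrib power2_eq_square algebra_simps)
  finally have B: "measure_pmf.expectation ?P (\<lambda>S. (\<Sum>r<R. \<Sum>s<R. X r S * X s S)) \<le> (real R)^2 * q^2 + R * q" .
  have "measure_pmf.expectation ?P (\<lambda>S. (freq M R S e)^2) \<le> ((real R)^2 * q^2 + R * q) / (real R)^2"
    unfolding A by (rule divide_right_mono[OF B]) simp
  also have "\<dots> = q^2 + q / R" using R by (simp add: field_simps power2_eq_square)
  finally show "measure_pmf.expectation ?P (\<lambda>S. (freq M R S e)^2) \<le> q^2 + q / R" .
qed

lemma freq01: "0 < R \<Longrightarrow> 0 \<le> freq M R S e \<and> freq M R S e \<le> 1"
proof -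
  assume R: "0 < R"
  have "card {r\<in>{..<R}. e \<in> M (S r)} \<le> card {..<R}" by (rule card_mono) auto
  then show ?thesis using R unfolding freq_def by (simp add: divide_le_eq_1)
qed

lemma samples_min:
  fixes M :: "'a set \<times> 'a set set \<Rightarrow> 'a set set" and V :: "'a set" and E :: "'a set set"
    and pv pe :: real and e :: "'a set" and R :: nat and t eps :: real
  defines "q \<equiv> qprob V E pv pe M e"
  assumes R: "0 < R" and t: "0 < t" and qt: "q \<le> t" and Rt: "1 / (4 * real R * t) \<le> eps"
  shows "measure_pmf.expectation (samples_pmf V E pv pe R) (\<lambda>S. min (freq M R S e) (2 * t)) \<ge> (1 - eps) * q"
proof -
  let ?P = "samples_pmf V E pv pe R"
  let ?f = "\<lambda>S. freq M R S e"
  have q0: "0 \<le> q" unfolding q_def qprob_def by simp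
  have m1: "measure_pmf.expectation ?P ?f = q" and m2: "measure_pmf.expectation ?P (\<lambda>S. (?f S)^2) \<le> q^2 + q / R"
    using samples_moments[OF R, of V E pv pe M e] by (simp_all add: q_def)
  have pw: "?f S - (?f S ^ 2 - 2 * q * ?f S + q^2) / (4 * t) \<le> min (?f S) (2 * t)" for S
  proof -
    have "?f S - 2 * t \<le> (?f S - q)^2 / (4*t)"
    proof -
      have "(?f S - q - 2*t)^2 \<ge> 0" by simp
      then have "4*t*(?f S - q - t) \<le> (?f S - q)^2" by (simp add: power2_eq_square algebra_simps)
      then have "?f S - q - t \<le> (?f S - q)^2 / (4*t)" using t by (simp add: field_simps)
      then show ?thesis using qt by linarith
    qed
    moreover have "0 \<le> (?f S - q)^2 / (4*t)" using t by simp
    ultimately show ?thesis by (simp add: power2_eq_square algebra_simps min_def)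
  qed
  have fb: "0 \<le> ?f S" "?f S \<le> 1" for S using freq01[OF R, of M S e] by auto
  have fi: "integrable ?P ?f" by (rule int_bnd[where B=1]) (use fb in auto)
  have f2i: "integrable ?P (\<lambda>S. (?f S)^2)" by (rule int_bnd[where B=1]) (use fb in \<open>auto simp: abs_le_iff power_le_one\<close>)
  have mb: "\<bar>min (?f S) (2 * t)\<bar> \<le> 1" for S using fb(1)[of S] fb(2)[of S] t by (auto simp: min_def abs_le_iff)
  have mi: "integrable ?P (\<lambda>S. min (?f S) (2 * t))" by (rule int_bnd[where B=1], rule mb)
  have "measure_pmf.expectation ?P (\<lambda>S. ?f S - (?f S ^ 2 - 2 * q * ?f S + q^2) / (4 * t))
       = q - (measure_pmf.expectation ?P (\<lambda>S. (?f S)^2) - 2 * q * q + q^2) / (4*t)"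
    using fi f2i m1 by (simp add: Bochner_Integration.integral_diff integral_divide_zero Bochner_Integration.integral_add)
  moreover have "(measure_pmf.expectation ?P (\<lambda>S. (?f S)^2) - 2 * q * q + q^2) / (4*t) \<le> (q / R) / (4 * t)"
    by (rule divide_right_mono) (use m2 t in \<open>auto simp: power2_eq_square\<close>)
  moreover have "q - (q / R) / (4 * t) \<ge> (1 - eps) * q"
  proof -
    have "(q / R) / (4 * t) = q * (1 / (4 * real R * t))" by simp
    also have "\<dots> \<le> q * eps" by (rule mult_left_mono[OF Rt q0])
    finally show ?thesis by (simp add: algebra_simps)
  qed
  moreover have "measure_pmf.expectation ?P (\<lambda>S. ?f S - (?f S ^ 2 - 2 * q * ?f S + q^2) / (4 * t))
      \<le> measure_pmf.expectation ?P (\<lambda>S. min (?f S) (2 * t))"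
    by (rule integral_mono[OF _ mi pw])
       (intro Bochner_Integration.integrable_diff integrable_divide Bochner_Integration.integrable_add
          integrable_mult_right fi f2i measure_pmf.integrable_const)
  ultimately show ?thesis by linarith
qed

lemma params:
  assumes "0 < eps" "eps \<le> exp (-1)" "0 < pv" "pv \<le> 1" "0 < pe" "pe \<le> 1"
  shows "0 < tau eps pv pe" "0 < rounds eps pv pe"
    "1 / (4 * real (rounds eps pv pe) * tau eps pv pe) \<le> eps"
proof -
  define c where "c = pv^2 * pe"
  have c0: "0 < c" and c1: "c \<le> 1" using assms by (auto simp: c_def power_le_one mult_le_one)
  have "ln eps \<le> -1" using assms(1,2) by (metis ln_exp ln_le_cancel_iff exp_gt_zero)
  then have L1: "1 \<le> ln (1/eps)" using assms(1) by (simp add: ln_div)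
  have "eps * c \<le> eps" using c1 assms(1) by (simp add: mult_left_le)
  then have "1/eps \<le> 1/(eps*c)" using assms(1) c0 by (intro divide_left_mono) auto
  then have L2: "ln (1/eps) \<le> ln (1/(eps*c))" using assms(1) c0 by (subst ln_le_cancel_iff) auto
  define X where "X = 2000 * ln (1 / eps) * ln (1 / (eps * c)) / (eps ^ 4 * c)"
  have lp: "0 < ln (1/eps)" "0 < ln (1/(eps*c))" using L1 L2 by auto
  have X0: "0 < X" unfolding X_def using lp c0 assms(1) by (intro divide_pos_pos mult_pos_pos) auto
  have R: "rounds eps pv pe = nat \<lceil>X\<rceil>" unfolding rounds_def X_def c_def by (simp add: mult.assoc)
  have RX: "X \<le> real (rounds eps pv pe)" unfolding R using X0 by linarith
  have t: "tau eps pv pe = eps^3 * c / (20 * ln (1/eps))" unfolding tau_def c_def by (simp add: mult.assoc)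
  show t0: "0 < tau eps pv pe" unfolding t using lp c0 assms(1) by (intro divide_pos_pos mult_pos_pos) auto
  show "0 < rounds eps pv pe" using RX X0 by linarith
  have "X * tau eps pv pe = 100 * ln (1 / (eps * c)) / eps"
  proof -
    have gen: "2000 * a * b / (eps ^ 4 * c) * (eps^3 * c / (20 * a)) = 100 * b / eps" if "0 < a" for a b
    proof -
      have "eps ^ 4 = eps * eps^3" by (simp add: power_numeral_reduce)
      then show ?thesis using that c0 assms(1) by (simp add: field_simps)
    qed
    show ?thesis unfolding X_def t by (rule gen) (rule lp(1))
  qed
  also have "\<dots> \<ge> 100 / eps" using L1 L2 assms(1) by (simp add: divide_right_mono)
  finally have "100 / eps \<le> real (rounds eps pv pe) * tau eps pv pe"
    using mult_right_mono[OF RX less_imp_le[OF t0]] by linarith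
  then have K: "1 / eps \<le> 4 * real (rounds eps pv pe) * tau eps pv pe" using assms(1)
    by (simp add: field_simps)
  define K where "K = 4 * real (rounds eps pv pe) * tau eps pv pe"
  have K0: "0 < K" using K assms(1) unfolding K_def by (meson less_le_trans zero_less_divide_1_iff)
  have "1 \<le> eps * K" using K assms(1) unfolding K_def[symmetric] by (simp add: divide_le_eq mult.commute)
  then show "1 / (4 * real (rounds eps pv pe) * tau eps pv pe) \<le> eps"
    using K0 unfolding K_def[symmetric] by (simp add: divide_le_eq mult.commute)
qed

theorem mainTheorem7:
  fixes V :: "'a set" and E :: "'a set set" and w :: "'a set \<Rightarrow> real"
    and eps pv pe :: real and M :: "'a set \<times> 'a set set \<Rightarrow> 'a set set"
  assumes "0 < eps" "eps \<le> exp (-1)"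
    and "0 < pv" "pv \<le> 1" "0 < pe" "pe \<le> 1"
    and "is_graph V E"
    and "\<And>e. e \<in> E \<Longrightarrow> 0 \<le> w e"
    and "\<And>Vr Er. Vr \<subseteq> V \<Longrightarrow> Er \<subseteq> E \<Longrightarrow> (\<forall>e\<in>Er. e \<subseteq> Vr) \<Longrightarrow>
           is_max_weight_matching w Er (M (Vr, Er))"
  shows "measure_pmf.expectation
           (pair_pmf (samples_pmf V E pv pe (rounds eps pv pe)) (realization_pmf V E pv pe))
           (\<lambda>(S, H). \<Sum>e\<in>EQ M (rounds eps pv pe) S \<inter> snd H \<inter> noncrucial V E eps pv pe M.
                        w e * xtilde V E eps pv pe M S H e)
         \<ge> (1 - eps) * phi V E pv pe M w (noncrucial V E eps pv pe M)"
proof -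
  define R where "R = rounds eps pv pe"
  define t where "t = tau eps pv pe"
  define c where "c = pv^2 * pe"
  define Nn where "Nn = noncrucial V E eps pv pe M"
  define q where "q = qprob V E pv pe M"
  have t0: "0 < t" and R0: "0 < R" and Rt: "1 / (4 * real R * t) \<le> eps"
    using params[OF assms(1-6)] by (auto simp: R_def t_def)
  have c0: "0 < c" using assms by (simp add: c_def)
  have fE: "finite E" using assms(7) unfolding is_graph_def
    by (meson Pow_iff finite_Pow_iff finite_subset subsetI)
  have NE: "Nn \<subseteq> E" by (auto simp: Nn_def noncrucial_def)
  have fN: "finite Nn" using finite_subset[OF NE fE] .
  have qt: "q e \<le> t" if "e \<in> Nn" for e using that by (auto simp: Nn_def noncrucial_def q_def t_def)
  define G where "G = (\<lambda>e S. min (freq M R S e) (2 * t))"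
  define I where "I = (\<lambda>e (H :: 'a set \<times> 'a set set). if e \<in> snd H then 1 else (0::real))"
  have fb: "0 \<le> freq M R S e" "freq M R S e \<le> 1" for S e using freq01[OF R0, of M S e] by auto
  have G0: "0 \<le> G e S" "G e S \<le> 2 * t" for e S using fb[of S e] t0 by (auto simp: G_def)
  have I0: "0 \<le> I e H" "I e H \<le> 1" for e H by (auto simp: I_def)
  have pw: "(\<Sum>e\<in>EQ M R S \<inter> snd H \<inter> Nn. w e * xtilde V E eps pv pe M S H e) =
            (\<Sum>e\<in>Nn. w e / c * (G e S * I e H))" for S H
  proof -
    have "(\<Sum>e\<in>EQ M R S \<inter> snd H \<inter> Nn. w e * xtilde V E eps pv pe M S H e) =
          (\<Sum>e\<in>Nn \<inter> (EQ M R S \<inter> snd H). w e * xtilde V E eps pv pe M S H e)"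
      by (simp add: Int_commute)
    also have "\<dots> = (\<Sum>e\<in>Nn. if e \<in> EQ M R S \<inter> snd H then w e * xtilde V E eps pv pe M S H e else 0)"
      by (rule sum.inter_restrict[OF fN])
    also have "\<dots> = (\<Sum>e\<in>Nn. w e / c * (G e S * I e H))"
    proof (rule sum.cong[OF refl])
      fix e assume eN: "e \<in> Nn"
      show "(if e \<in> EQ M R S \<inter> snd H then w e * xtilde V E eps pv pe M S H e else 0) = w e / c * (G e S * I e H)"
      proof (cases "e \<in> snd H")
        case False then show ?thesis by (simp add: I_def)
      next
        case True
        show ?thesis
        proof (cases "e \<in> EQ M R S")
          case False
          then have "{r \<in> {..<R}. e \<in> M (S r)} = {}" by (auto simp: EQ_def)
          then have "freq M R S e = 0" by (simp add: freq_def)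
          then show ?thesis using False t0 by (simp add: G_def)
        next
          case EQ: True
          have mm: "min (a / c) (b / c) = min a b / c" for a b using c0 by (simp add: min_def divide_le_cancel)
          show ?thesis using EQ True eN mm
            by (simp add: xtilde_def G_def I_def R_def t_def c_def Nn_def)
        qed
      qed
    qed
    finally show ?thesis .
  qed
  have "measure_pmf.expectation
           (pair_pmf (samples_pmf V E pv pe R) (realization_pmf V E pv pe))
           (\<lambda>(S, H). \<Sum>e\<in>EQ M R S \<inter> snd H \<inter> Nn. w e * xtilde V E eps pv pe M S H e)
      = measure_pmf.expectation (pair_pmf (samples_pmf V E pv pe R) (realization_pmf V E pv pe))
           (\<lambda>z. \<Sum>e\<in>Nn. w e / c * (G e (fst z) * I e (snd z)))"
    by (simp add: pw case_prod_unfold)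
  also have "\<dots> = (\<Sum>e\<in>Nn. w e / c * measure_pmf.expectation (pair_pmf (samples_pmf V E pv pe R) (realization_pmf V E pv pe))
           (\<lambda>z. G e (fst z) * I e (snd z)))"
  proof -
    have "integrable (measure_pmf (pair_pmf (samples_pmf V E pv pe R) (realization_pmf V E pv pe)))
            (\<lambda>z. G e (fst z) * I e (snd z))" for e
    proof (rule int_bnd[where B="2*t"])
      fix z
      have "G e (fst z) * I e (snd z) \<le> 2 * t * 1" by (rule mult_mono) (use G0 I0 t0 in auto)
      then show "\<bar>G e (fst z) * I e (snd z)\<bar> \<le> 2 * t" using G0 I0 by simp
    qed
    then show ?thesis by (simp add: Bochner_Integration.integral_sum)
  qed
  also have "\<dots> = (\<Sum>e\<in>Nn. w e * measure_pmf.expectation (samples_pmf V E pv pe R) (G e))"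
  proof (rule sum.cong[OF refl])
    fix e assume eN: "e \<in> Nn"
    have "measure_pmf.expectation (pair_pmf (samples_pmf V E pv pe R) (realization_pmf V E pv pe))
           (\<lambda>z. G e (fst z) * I e (snd z)) = measure_pmf.expectation (samples_pmf V E pv pe R) (G e) *
            measure_pmf.expectation (realization_pmf V E pv pe) (I e)"
      by (rule E_pair_mult[where B="2*t" and C=1]) (use G0 I0 in auto)
    also have "measure_pmf.expectation (realization_pmf V E pv pe) (I e) = c"
      unfolding I_def c_def by (rule prob_edge[OF assms(7)]) (use eN NE assms in auto)
    finally show "w e / c * measure_pmf.expectation (pair_pmf (samples_pmf V E pv pe R) (realization_pmf V E pv pe))
           (\<lambda>z. G e (fst z) * I e (snd z)) = w e * measure_pmf.expectation (samples_pmf V E pv pe R) (G e)"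
      using c0 by simp
  qed
  also have "\<dots> \<ge> (\<Sum>e\<in>Nn. w e * ((1 - eps) * q e))"
  proof (rule sum_mono)
    fix e assume eN: "e \<in> Nn"
    have "(1 - eps) * q e \<le> measure_pmf.expectation (samples_pmf V E pv pe R) (G e)"
      unfolding G_def q_def by (rule samples_min[OF R0 t0 _ Rt]) (use qt[OF eN] in \<open>simp add: q_def\<close>)
    then show "w e * ((1 - eps) * q e) \<le> w e * measure_pmf.expectation (samples_pmf V E pv pe R) (G e)"
      using assms(8) eN NE by (intro mult_left_mono) auto
  qed
  moreover have "(\<Sum>e\<in>Nn. w e * ((1 - eps) * q e)) = (1 - eps) * phi V E pv pe M w Nn"
    by (simp add: phi_def q_def sum_distrib_left algebra_simps)
  ultimately show ?thesis unfolding R_def[symmetric] Nn_def[symmetric] by linarith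
qed

end
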